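(* Let $m,n,w$ be positive integers with $w\le m$, and let $d=(n-1)w+r$ with $0<r\le w$. Then $A(m,n,w,d)\le B(m,w,r)$.
   Context: $J(m,w)$ denotes the set of binary vectors of length $m$ and Hamming weight $w$. Elements of $J(m,w)^n$ are identified with $m\times n$ binary matrices all of whose columns have weight $w$, with binary Hamming distance. $A(m,n,w,d)$ is the maximum cardinality of a nonempty subset of $J(m,w)^n$ with pairwise Hamming distances at least $2d$. $B(m,w,r)$ is the maximum cardinality of a nonempty subset of $J(m,w)$ with pairwise Hamming distances at least $2r$. *)

theory Defs
  imports Main
begin

definition weight :: "bool list \<Rightarrow> nat" where
  "weight v = length (filter id v)"

definition hamming :: "bool list \<Rightarrow> bool list \<Rightarrow> nat" where
  "hamming u v = card {i. i < length u \<and> u ! i \<noteq> v ! i}"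

definition J :: "nat \<Rightarrow> nat \<Rightarrow> bool list set" where
  "J m w = {v. length v = m \<and> weight v = w}"

text \<open>J(m,w)^n: m x n binary matrices given as the list of their n columns,
  each column of weight w.\<close>
definition Jpow :: "nat \<Rightarrow> nat \<Rightarrow> nat \<Rightarrow> bool list list set" where
  "Jpow m n w = {M. length M = n \<and> (\<forall>c\<in>set M. c \<in> J m w)}"

definition mdist :: "bool list list \<Rightarrow> bool list list \<Rightarrow> nat" where
  "mdist M N = (\<Sum>j<length M. hamming (M ! j) (N ! j))"

definition A :: "nat \<Rightarrow> nat \<Rightarrow> nat \<Rightarrow> nat \<Rightarrow> nat" where
  "A m n w d = Max {card C | C. C \<subseteq> Jpow m n w \<and> C \<noteq> {} \<and>
      (\<forall>x\<in>C. \<forall>y\<in>C. x \<noteq> y \<longrightarrow> 2 * d \<le> mdist x y)}"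

definition B :: "nat \<Rightarrow> nat \<Rightarrow> nat \<Rightarrow> nat" where
  "B m w r = Max {card C | C. C \<subseteq> J m w \<and> C \<noteq> {} \<and>
      (\<forall>x\<in>C. \<forall>y\<in>C. x \<noteq> y \<longrightarrow> 2 * r \<le> hamming x y)}"

end

theory Submission
  imports Defs
begin

lemma card_true: "card {i. i < length u \<and> u ! i} = weight u"
  unfolding weight_def by (simp add: length_filter_conv_card)

lemma ham_le:
  assumes "u \<in> J m w" "v \<in> J m w"
  shows "hamming u v \<le> 2 * w"
proof -
  have lu: "length u = m" "length v = m" "weight u = w" "weight v = w"
    using assms by (auto simp: J_def)
  have "{i. i < length u \<and> u ! i \<noteq> v ! i} \<subseteq>
        {i. i < length u \<and> u ! i} \<union> {i. i < length v \<and> v ! i}"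
    using lu by auto
  hence "hamming u v \<le> card ({i. i < length u \<and> u ! i} \<union> {i. i < length v \<and> v ! i})"
    unfolding hamming_def by (intro card_mono) auto
  also have "\<dots> \<le> card {i. i < length u \<and> u ! i} + card {i. i < length v \<and> v ! i}"
    by (rule card_Un_le)
  finally show ?thesis using lu card_true[of u] card_true[of v] by simp
qed

lemma col0:
  assumes "x \<in> Jpow m n w" "y \<in> Jpow m n w" "0 < n"
    "2 * ((n - 1) * w + r) \<le> mdist x y"
  shows "2 * r \<le> hamming (x ! 0) (y ! 0)"
proof -
  have len: "length x = n" "length y = n" using assms by (auto simp: Jpow_def)
  have inJ: "\<And>j. j < n \<Longrightarrow> x ! j \<in> J m w \<and> y ! j \<in> J m w"
    using assms len by (auto simp: Jpow_def)
  have "mdist x y = hamming (x!0) (y!0) + (\<Sum>j\<in>{..<n} - {0}. hamming (x!j) (y!j))"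
    unfolding mdist_def len using assms(3) by (subst sum.remove[of _ 0]) auto
  moreover have "(\<Sum>j\<in>{..<n} - {0}. hamming (x!j) (y!j)) \<le> (\<Sum>j\<in>{..<n} - {0}. 2 * w)"
    using inJ ham_le by (intro sum_mono) (meson DiffD1 lessThan_iff)
  moreover have "(\<Sum>j\<in>{..<n} - {0}. 2 * w) = (n - 1) * (2 * w)"
    using assms(3) by simp
  ultimately show ?thesis using assms(4) by (simp add: algebra_simps)
qed

lemma J_fin: "finite (J m w)"
proof -
  have "J m w \<subseteq> {xs. set xs \<subseteq> UNIV \<and> length xs = m}" by (auto simp: J_def)
  moreover have "finite {xs :: bool list. set xs \<subseteq> UNIV \<and> length xs = m}"
    by (rule finite_lists_length_eq) simp
  ultimately show ?thesis by (rule finite_subset)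
qed

lemma J_ne: "w \<le> m \<Longrightarrow> replicate w True @ replicate (m - w) False \<in> J m w"
  by (simp add: J_def weight_def)

theorem proposition9:
  fixes m n w r d :: nat
  assumes "0 < m" and "0 < n" and "0 < w" and "w \<le> m"
    and "0 < r" and "r \<le> w" and "d = (n - 1) * w + r"
  shows "A m n w d \<le> B m w r"
proof -
  let ?SB = "{card C | C. C \<subseteq> J m w \<and> C \<noteq> {} \<and>
      (\<forall>x\<in>C. \<forall>y\<in>C. x \<noteq> y \<longrightarrow> 2 * r \<le> hamming x y)}"
  let ?SA = "{card C | C. C \<subseteq> Jpow m n w \<and> C \<noteq> {} \<and>
      (\<forall>x\<in>C. \<forall>y\<in>C. x \<noteq> y \<longrightarrow> 2 * d \<le> mdist x y)}"
  have finB: "finite ?SB"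
  proof (rule finite_subset[of _ "{..card (J m w)}"])
    show "?SB \<subseteq> {..card (J m w)}" using J_fin by (auto intro: card_mono)
  qed simp
  have bound: "k \<le> B m w r" if kin: "k \<in> ?SA" for k
  proof -
    obtain C where C: "k = card C" "C \<subseteq> Jpow m n w" "C \<noteq> {}"
      "\<forall>x\<in>C. \<forall>y\<in>C. x \<noteq> y \<longrightarrow> 2 * d \<le> mdist x y" using kin by (simp only: mem_Collect_eq) blast
    have dist: "2 * r \<le> hamming (x!0) (y!0)" if "x \<in> C" "y \<in> C" "x \<noteq> y" for x y
      using col0[of x m n w y r] C that assms by auto
    have inj: "inj_on (\<lambda>x. x ! 0) C"
    proof (rule inj_onI, rule ccontr)
      fix x y assume "x \<in> C" "y \<in> C" "x ! 0 = y ! 0" "x \<noteq> y"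
      with dist[of x y] assms(5) show False by (simp add: hamming_def)
    qed
    have sub: "(\<lambda>x. x ! 0) ` C \<subseteq> J m w"
      using C(2) assms(2) by (force simp: Jpow_def)
    have "card ((\<lambda>x. x ! 0) ` C) \<in> ?SB"
      apply (simp only: mem_Collect_eq)
      apply (rule exI[of _ "(\<lambda>x. x ! 0) ` C"])
      using sub C(3) dist by auto
    hence "card ((\<lambda>x. x ! 0) ` C) \<le> B m w r"
      unfolding B_def using finB by (rule Max_ge[rotated])
    thus ?thesis using C(1) card_image[OF inj] by simp
  qed
  have "{replicate n (replicate w True @ replicate (m - w) False)} \<subseteq> Jpow m n w"
    using J_ne[OF assms(4)] by (auto simp: Jpow_def)
  hence "card {replicate n (replicate w True @ replicate (m - w) False)} \<in> ?SA"
    apply (simp only: mem_Collect_eq)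
    apply (rule exI[of _ "{replicate n (replicate w True @ replicate (m - w) False)}"])
    by simp
  hence ne: "?SA \<noteq> {}" by blast
  have finA: "finite ?SA"
    by (rule finite_subset[of _ "{..B m w r}"]) (use bound in blast, simp)
  show ?thesis unfolding A_def by (rule Max.boundedI[OF finA ne bound])
qed

end
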